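(* Let $Z\colon TM\setminus 0\to TM$ be a smooth vector field along $E$ (components $Z^\mu(x,y)$) and let $s\colon M\to TM\setminus 0$ be a smooth section. Then on $M$ \[ \nabla^{s^*g}\cdot s^*Z=s^*\big(\nabla^{HC}\cdot Z\big)+I_\mu(x,s(x))\,D_{s^*Z}s^\mu+\frac{\partial Z^\mu}{\partial y^\beta}(x,s(x))\,D_\mu s^\beta , \] where $s^*Z$ is the vector field $x\mapsto Z^\mu(x,s(x))\partial_\mu$ on $M$, $\nabla^{s^*g}\cdot$ denotes the divergence with respect to the Levi-Civita connection of the pseudo-Riemannian metric $s^*g$ (components $g_{\alpha\beta}(x,s(x))$), and $\nabla^{HC}\cdot Z=(\nabla^{HC}_\alpha Z)^\alpha$.
   Context: $M$ smooth $n$-manifold, $E=TM\setminus 0$, induced coordinates $\{x^\mu,y^\mu\}$. $\mathscr{L}\colon E\to\mathbb{R}$ smooth, positively homogeneous of degree two in $y$, with non-degenerate Finsler metric $g_{\mu\nu}=\partial^2\mathscr{L}/\partial y^\mu\partial y^\nu$ (any signature), inverse $g^{\mu\nu}$. Cartan torsion $C_{\alpha\beta\gamma}=\tfrac12\partial g_{\beta\gamma}/\partial y^\alpha$, mean Cartan torsion $I_\gamma=g^{\alpha\beta}C_{\alpha\beta\gamma}$. Spray $2G^\alpha=g^{\alpha\delta}\big(\frac{\partial^2\mathscr{L}}{\partial x^\gamma\partial y^\delta}y^\gamma-\frac{\partial\mathscr{L}}{\partial x^\delta}\big)$, $N^\alpha_\mu=\partial G^\alpha/\partial y^\mu$, $\frac{\delta}{\delta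 x^\mu}=\frac{\partial}{\partial x^\mu}-N^\nu_\mu\frac{\partial}{\partial y^\nu}$, $\Gamma^\alpha_{\beta\gamma}=\tfrac12 g^{\alpha\sigma}\big(\frac{\delta g_{\sigma\gamma}}{\delta x^\beta}+\frac{\delta g_{\sigma\beta}}{\delta x^\gamma}-\frac{\delta g_{\beta\gamma}}{\delta x^\sigma}\big)$. Horizontal covariant derivative $(\nabla^{HC}_\alpha Z)^\beta=\frac{\delta Z^\beta}{\delta x^\alpha}+\Gamma^\beta_{\mu\alpha}Z^\mu$. For the section $s$: $D_\alpha s^\mu=\partial_\alpha s^\mu+N^\mu_\alpha(x,s(x))$, $D_Ws^\mu=W^\alpha D_\alpha s^\mu$; $s^*$ of a function on $E$ means its evaluation at $y=s(x)$. *)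

theory Defs
  imports "HOL-Analysis.Analysis"
begin

text \<open>The manifold M is represented by a coordinate
chart, an open set U of real^'n; points of TM are pairs (x,y) of real^'n,
and E = TM minus the zero section is U \<times> (UNIV - {0}).\<close>

definition dirder :: "'a::euclidean_space \<Rightarrow> ('a \<Rightarrow> real) \<Rightarrow> 'a \<Rightarrow> real" where
  "dirder b f p = frechet_derivative f (at p) b"

definition smooth_on :: "('a::euclidean_space \<Rightarrow> real) \<Rightarrow> 'a set \<Rightarrow> bool" where
  "smooth_on f S \<longleftrightarrow> (\<forall>bs. set bs \<subseteq> Basis \<longrightarrow> (foldr dirder bs f) differentiable_on S)"

definition pd :: "'n::finite \<Rightarrow> (real^'n \<Rightarrow> real) \<Rightarrow> real^'n \<Rightarrow> real" where
  "pd \<mu> f x = frechet_derivative f (at x) (axis \<mu> 1)"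

definition dX :: "'n::finite \<Rightarrow> (real^'n \<Rightarrow> real^'n \<Rightarrow> real) \<Rightarrow> real^'n \<Rightarrow> real^'n \<Rightarrow> real" where
  "dX \<mu> F x y = pd \<mu> (\<lambda>x'. F x' y) x"

definition dY :: "'n::finite \<Rightarrow> (real^'n \<Rightarrow> real^'n \<Rightarrow> real) \<Rightarrow> real^'n \<Rightarrow> real^'n \<Rightarrow> real" where
  "dY \<mu> F x y = pd \<mu> (\<lambda>y'. F x y') y"

definition fg :: "(real^'n \<Rightarrow> real^'n \<Rightarrow> real) \<Rightarrow> 'n::finite \<Rightarrow> 'n \<Rightarrow> real^'n \<Rightarrow> real^'n \<Rightarrow> real" where
  "fg L \<mu> \<nu> = dY \<mu> (dY \<nu> L)"

definition gmat :: "(real^'n \<Rightarrow> real^'n \<Rightarrow> real) \<Rightarrow> real^'n::finite \<Rightarrow> real^'n \<Rightarrow> real^'n^'n" where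
  "gmat L x y = (\<chi> \<mu> \<nu>. fg L \<mu> \<nu> x y)"

definition ginv :: "(real^'n \<Rightarrow> real^'n \<Rightarrow> real) \<Rightarrow> 'n::finite \<Rightarrow> 'n \<Rightarrow> real^'n \<Rightarrow> real^'n \<Rightarrow> real" where
  "ginv L \<mu> \<nu> x y = matrix_inv (gmat L x y) $ \<mu> $ \<nu>"

definition cartan :: "(real^'n \<Rightarrow> real^'n \<Rightarrow> real) \<Rightarrow> 'n::finite \<Rightarrow> 'n \<Rightarrow> 'n \<Rightarrow> real^'n \<Rightarrow> real^'n \<Rightarrow> real" where
  "cartan L \<alpha> \<beta> \<gamma> x y = dY \<alpha> (fg L \<beta> \<gamma>) x y / 2"

definition meanI :: "(real^'n \<Rightarrow> real^'n \<Rightarrow> real) \<Rightarrow> 'n::finite \<Rightarrow> real^'n \<Rightarrow> real^'n \<Rightarrow> real" where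
  "meanI L \<gamma> x y = (\<Sum>\<alpha>\<in>UNIV. \<Sum>\<beta>\<in>UNIV. ginv L \<alpha> \<beta> x y * cartan L \<alpha> \<beta> \<gamma> x y)"

definition spray :: "(real^'n \<Rightarrow> real^'n \<Rightarrow> real) \<Rightarrow> 'n::finite \<Rightarrow> real^'n \<Rightarrow> real^'n \<Rightarrow> real" where
  "spray L \<alpha> x y = (\<Sum>\<delta>\<in>UNIV. ginv L \<alpha> \<delta> x y *
       ((\<Sum>\<gamma>\<in>UNIV. dX \<gamma> (dY \<delta> L) x y * y $ \<gamma>) - dX \<delta> L x y)) / 2"

definition nlc :: "(real^'n \<Rightarrow> real^'n \<Rightarrow> real) \<Rightarrow> 'n::finite \<Rightarrow> 'n \<Rightarrow> real^'n \<Rightarrow> real^'n \<Rightarrow> real" where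
  "nlc L \<alpha> \<mu> = dY \<mu> (spray L \<alpha>)"

definition deltaX :: "(real^'n \<Rightarrow> real^'n \<Rightarrow> real) \<Rightarrow> 'n::finite \<Rightarrow> (real^'n \<Rightarrow> real^'n \<Rightarrow> real) \<Rightarrow> real^'n \<Rightarrow> real^'n \<Rightarrow> real" where
  "deltaX L \<mu> F x y = dX \<mu> F x y - (\<Sum>\<nu>\<in>UNIV. nlc L \<nu> \<mu> x y * dY \<nu> F x y)"

definition chrHC :: "(real^'n \<Rightarrow> real^'n \<Rightarrow> real) \<Rightarrow> 'n::finite \<Rightarrow> 'n \<Rightarrow> 'n \<Rightarrow> real^'n \<Rightarrow> real^'n \<Rightarrow> real" where
  "chrHC L \<alpha> \<beta> \<gamma> x y = (\<Sum>\<sigma>\<in>UNIV. ginv L \<alpha> \<sigma> x y *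
       (deltaX L \<beta> (fg L \<sigma> \<gamma>) x y + deltaX L \<gamma> (fg L \<sigma> \<beta>) x y - deltaX L \<sigma> (fg L \<beta> \<gamma>) x y)) / 2"

definition divHC :: "(real^'n \<Rightarrow> real^'n \<Rightarrow> real) \<Rightarrow> (real^'n \<Rightarrow> real^'n \<Rightarrow> real^'n) \<Rightarrow> real^'n::finite \<Rightarrow> real^'n \<Rightarrow> real" where
  "divHC L Z x y = (\<Sum>\<alpha>\<in>UNIV. deltaX L \<alpha> (\<lambda>x y. Z x y $ \<alpha>) x y
       + (\<Sum>\<mu>\<in>UNIV. chrHC L \<alpha> \<mu> \<alpha> x y * Z x y $ \<mu>))"

definition Dsec :: "(real^'n \<Rightarrow> real^'n \<Rightarrow> real) \<Rightarrow> (real^'n \<Rightarrow> real^'n) \<Rightarrow> 'n::finite \<Rightarrow> 'n \<Rightarrow> real^'n \<Rightarrow> real" where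
  "Dsec L s \<alpha> \<mu> x = pd \<alpha> (\<lambda>x'. s x' $ \<mu>) x + nlc L \<mu> \<alpha> x (s x)"

definition chrLC :: "(real^'n \<Rightarrow> real^'n^'n) \<Rightarrow> 'n::finite \<Rightarrow> 'n \<Rightarrow> 'n \<Rightarrow> real^'n \<Rightarrow> real" where
  "chrLC h \<alpha> \<beta> \<gamma> x = (\<Sum>\<sigma>\<in>UNIV. matrix_inv (h x) $ \<alpha> $ \<sigma> *
       (pd \<beta> (\<lambda>x'. h x' $ \<sigma> $ \<gamma>) x + pd \<gamma> (\<lambda>x'. h x' $ \<sigma> $ \<beta>) x
        - pd \<sigma> (\<lambda>x'. h x' $ \<beta> $ \<gamma>) x)) / 2"

definition divLC :: "(real^'n \<Rightarrow> real^'n^'n) \<Rightarrow> (real^'n \<Rightarrow> real^'n) \<Rightarrow> real^'n::finite \<Rightarrow> real" where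
  "divLC h W x = (\<Sum>\<alpha>\<in>UNIV. pd \<alpha> (\<lambda>x'. W x' $ \<alpha>) x
       + (\<Sum>\<mu>\<in>UNIV. chrLC h \<alpha> \<alpha> \<mu> x * W x $ \<mu>))"

end

theory Submission
  imports Defs
begin


lemma matrix_inv_sym:
  fixes A :: "real^'n^'n"
  assumes inv: "invertible A" and sym: "transpose A = A"
  shows "matrix_inv A $ i $ j = matrix_inv A $ j $ i"
proof -
  let ?B = "matrix_inv A"
  have h: "A ** ?B = mat 1 \<and> ?B ** A = mat 1"
    unfolding matrix_inv_def using inv[unfolded invertible_def] by (rule someI_ex)
  have "transpose (A ** ?B) = mat 1" using h by simp
  hence "transpose ?B ** A = mat 1" by (simp add: matrix_transpose_mul sym)
  hence "transpose ?B ** A ** ?B = ?B" by simp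
  hence "transpose ?B = ?B" using h by (metis matrix_mul_assoc matrix_mul_rid)
  thus ?thesis by (metis transpose_def vec_lambda_beta)
qed

lemma dirder_loc:
  assumes "open S" "\<And>p. p \<in> S \<Longrightarrow> f p = g p" "p \<in> S"
  shows "dirder b f p = dirder b g p"
proof -
  have "\<And>D. (f has_derivative D) (at p) \<longleftrightarrow> (g has_derivative D) (at p)"
    using assms has_derivative_transform_within_open by metis
  thus ?thesis unfolding dirder_def frechet_derivative_def by simp
qed

lemma foldr_dirder_loc:
  assumes "open S" "\<forall>q\<in>S. f q = g q"
  shows "p \<in> S \<Longrightarrow> foldr dirder bs f p = foldr dirder bs g p"
proof (induction bs arbitrary: p)
  case Nil thus ?case using assms by simp
next
  case (Cons b bs)
  have "dirder b (foldr dirder bs f) p = dirder b (foldr dirder bs g) p"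
    by (rule dirder_loc[OF assms(1) Cons.IH Cons.prems])
  thus ?case by simp
qed

lemma smooth_on_loc:
  assumes "open S" "\<And>p. p \<in> S \<Longrightarrow> f p = g p" "smooth_on f S"
  shows "smooth_on g S"
  unfolding smooth_on_def
proof (intro allI impI)
  fix bs :: "'a list" assume "set bs \<subseteq> Basis"
  hence d: "foldr dirder bs f differentiable_on S" using assms(3) smooth_on_def by blast
  show "foldr dirder bs g differentiable_on S"
    unfolding differentiable_on_def
  proof
    fix p assume p: "p \<in> S"
    have "foldr dirder bs f differentiable at p" using d p assms(1)
      by (simp add: differentiable_on_eq_differentiable_at)
    then obtain D where "(foldr dirder bs f has_derivative D) (at p)" unfolding differentiable_def by blast
    have "(foldr dirder bs g has_derivative D) (at p)"
    proof (rule has_derivative_transform_within_open[OF _ assms(1) p])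
      show "(foldr dirder bs f has_derivative D) (at p)" by fact
      fix q assume "q \<in> S" thus "foldr dirder bs f q = foldr dirder bs g q"
        using foldr_dirder_loc[OF assms(1)] assms(2) by blast
    qed
    thus "foldr dirder bs g differentiable at p within S"
      unfolding differentiable_def using has_derivative_at_withinI by blast
  qed
qed

lemma smooth_on_dirder:
  assumes "smooth_on f S" "b \<in> Basis"
  shows "smooth_on (dirder b f) S"
  unfolding smooth_on_def
proof (intro allI impI)
  fix bs :: "'a list" assume "set bs \<subseteq> Basis"
  hence "set (bs @ [b]) \<subseteq> Basis" using assms(2) by simp
  hence "foldr dirder (bs @ [b]) f differentiable_on S" using assms(1) smooth_on_def by blast
  thus "foldr dirder bs (dirder b f) differentiable_on S" by simp
qed

lemma smooth_on_diff_at: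
  assumes "smooth_on f S" "open S" "p \<in> S"
  shows "f differentiable at p"
proof -
  have "foldr dirder [] f differentiable_on S" using assms(1) unfolding smooth_on_def by (metis empty_subsetI list.set(1))
  thus ?thesis using assms by (simp add: differentiable_on_eq_differentiable_at)
qed




lemma line_deriv:
  fixes f :: "'a::euclidean_space \<Rightarrow> real"
  assumes "f differentiable at (q + t *\<^sub>R u)"
  shows "((\<lambda>s. f (q + s *\<^sub>R u)) has_real_derivative dirder u f (q + t *\<^sub>R u)) (at t)"
proof -
  let ?D = "frechet_derivative f (at (q + t *\<^sub>R u))"
  have fD: "(f has_derivative ?D) (at (q + t *\<^sub>R u))" using assms frechet_derivative_works by blast
  have lD: "((\<lambda>s. q + s *\<^sub>R u) has_derivative (\<lambda>h. h *\<^sub>R u)) (at t)"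
    by (auto intro!: derivative_eq_intros)
  have "((f \<circ> (\<lambda>s. q + s *\<^sub>R u)) has_derivative (?D \<circ> (\<lambda>h. h *\<^sub>R u))) (at t)"
    by (rule diff_chain_at[OF lD fD])
  moreover have "(?D \<circ> (\<lambda>h. h *\<^sub>R u)) = (*) (dirder u f (q + t *\<^sub>R u))"
    using has_derivative_bounded_linear[OF fD]
    by (auto simp: dirder_def fun_eq_iff linear.scaleR[OF bounded_linear.linear])
  ultimately have "((f \<circ> (\<lambda>s. q + s *\<^sub>R u)) has_derivative (*) (dirder u f (q + t *\<^sub>R u))) (at t)"
    by simp
  thus ?thesis unfolding has_field_derivative_def by (simp add: o_def)
qed

lemma line_deriv_u:
  fixes f :: "'a::euclidean_space \<Rightarrow> real"
  assumes "f differentiable at (p + s *\<^sub>R u + b *\<^sub>R v)"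
  shows "((\<lambda>s. f (p + s *\<^sub>R u + b *\<^sub>R v)) has_real_derivative dirder u f (p + s *\<^sub>R u + b *\<^sub>R v)) (at s)"
proof -
  have e: "\<And>s. p + s *\<^sub>R u + b *\<^sub>R v = (p + b *\<^sub>R v) + s *\<^sub>R u" by (simp add: algebra_simps)
  show ?thesis unfolding e using line_deriv assms[unfolded e] by blast
qed

lemma line_deriv_v:
  fixes f :: "'a::euclidean_space \<Rightarrow> real"
  assumes "f differentiable at (p + a *\<^sub>R u + t *\<^sub>R v)"
  shows "((\<lambda>t. f (p + a *\<^sub>R u + t *\<^sub>R v)) has_real_derivative dirder v f (p + a *\<^sub>R u + t *\<^sub>R v)) (at t)"
  using line_deriv assms by blast

lemma aux_abs1: "\<bar>x - a\<bar> < (a - b) / 2 \<Longrightarrow> (a + b) / 2 < (x::real)" unfolding abs_less_iff by (simp add: field_simps)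
lemma aux_abs2: "\<bar>x - b\<bar> < (a - b) / 2 \<Longrightarrow> x < (a + b) / (2::real)" unfolding abs_less_iff by (simp add: field_simps)

lemma schwarz_half:
  fixes f :: "'a::euclidean_space \<Rightarrow> real"
  assumes S: "open S" and pS: "p \<in> S"
    and d0: "\<forall>q\<in>S. f differentiable at q"
    and du: "\<forall>q\<in>S. dirder u f differentiable at q"
    and dv: "\<forall>q\<in>S. dirder v f differentiable at q"
    and cA: "continuous_on S (dirder v (dirder u f))"
    and cB: "continuous_on S (dirder u (dirder v f))"
  shows "\<not> (dirder v (dirder u f) p > dirder u (dirder v f) p)"
proof
  let ?A = "dirder v (dirder u f)" and ?B = "dirder u (dirder v f)"
  assume gt: "?A p > ?B p"
  define c where "c = (?A p - ?B p) / 2"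
  define m where "m = (?A p + ?B p) / 2"
  have c: "c > 0" using gt c_def by simp
  obtain d1 where d1: "d1 > 0" "\<forall>q\<in>S. dist q p < d1 \<longrightarrow> dist (?A q) (?A p) < c"
    using cA pS c unfolding continuous_on_iff by blast
  obtain d2 where d2: "d2 > 0" "\<forall>q\<in>S. dist q p < d2 \<longrightarrow> dist (?B q) (?B p) < c"
    using cB pS c unfolding continuous_on_iff by blast
  obtain d3 where d3: "d3 > 0" "ball p d3 \<subseteq> S" using S pS open_contains_ball by blast
  define e where "e = min d1 (min d2 d3)"
  have e: "e > 0" using d1 d2 d3 e_def by simp
  define h where "h = e / (2 * (norm u + norm v + 1))"
  have nuv: "norm u + norm v + 1 > 0" using norm_ge_zero[of u] norm_ge_zero[of v] by linarith
  have h: "h > 0" using e h_def nuv by simp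
  have he: "h * (norm u + norm v) < e"
  proof -
    have "h * (norm u + norm v) < h * (2 * (norm u + norm v + 1))"
      using h nuv by (intro mult_strict_left_mono) auto
    also have "\<dots> = e" unfolding h_def using nuv by (simp add: field_simps)
    finally show ?thesis .
  qed
  have inb: "dist (p + a *\<^sub>R u + b *\<^sub>R v) p < e" if "0 \<le> a" "a \<le> h" "0 \<le> b" "b \<le> h" for a b
  proof -
    have "dist (p + a *\<^sub>R u + b *\<^sub>R v) p = norm (a *\<^sub>R u + b *\<^sub>R v)" by (simp add: dist_norm)
    also have "\<dots> \<le> a * norm u + b * norm v"
      using norm_triangle_ineq[of "a *\<^sub>R u" "b *\<^sub>R v"] that by simp
    also have "\<dots> \<le> h * norm u + h * norm v"
      using that by (intro add_mono mult_right_mono) auto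
    also have "\<dots> < e" using he by (simp add: algebra_simps)
    finally show ?thesis .
  qed
  have inS: "p + a *\<^sub>R u + b *\<^sub>R v \<in> S" if "0 \<le> a" "a \<le> h" "0 \<le> b" "b \<le> h" for a b
    using inb[OF that] d3 e_def by (auto simp: dist_commute subset_iff)
  have inS1: "p + a *\<^sub>R u \<in> S" if "0 \<le> a" "a \<le> h" for a
    using inS[of a 0] that h by simp
  have inS2: "p + b *\<^sub>R v \<in> S" if "0 \<le> b" "b \<le> h" for b
    using inS[of 0 b] that h by simp
  have Agt: "?A (p + a *\<^sub>R u + b *\<^sub>R v) > m" if "0 \<le> a" "a \<le> h" "0 \<le> b" "b \<le> h" for a b
  proof -
    have "dist (p + a *\<^sub>R u + b *\<^sub>R v) p < d1" using inb[OF that] e_def by simp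
    hence "dist (?A (p + a *\<^sub>R u + b *\<^sub>R v)) (?A p) < c" using d1(2) inS[OF that] by blast
    thus ?thesis unfolding dist_real_def c_def m_def by (rule aux_abs1)
  qed
  have Blt: "?B (p + a *\<^sub>R u + b *\<^sub>R v) < m" if "0 \<le> a" "a \<le> h" "0 \<le> b" "b \<le> h" for a b
  proof -
    have "dist (p + a *\<^sub>R u + b *\<^sub>R v) p < d2" using inb[OF that] e_def by simp
    hence "dist (?B (p + a *\<^sub>R u + b *\<^sub>R v)) (?B p) < c" using d2(2) inS[OF that] by blast
    thus ?thesis unfolding dist_real_def c_def m_def by (rule aux_abs2)
  qed
  define P where "P a b = p + a *\<^sub>R u + b *\<^sub>R v" for a b
  define \<Delta> where "\<Delta> = f (P h h) - f (P 0 h) - f (P h 0) + f (P 0 0)"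
  obtain \<xi> where \<xi>: "0 < \<xi>" "\<xi> < h"
    "(f (P h h) - f (P h 0)) - (f (P 0 h) - f (P 0 0)) =
       (h - 0) * (dirder u f (P \<xi> h) - dirder u f (P \<xi> 0))"
  proof -
    have "\<exists>z. 0 < z \<and> z < h \<and> (f (P h h) - f (P h 0)) - (f (P 0 h) - f (P 0 0)) =
       (h - 0) * (dirder u f (P z h) - dirder u f (P z 0))"
    proof (rule MVT2[of 0 h "\<lambda>s. f (P s h) - f (P s 0)"])
      show "0 < h" by fact
      fix s assume "0 \<le> s" "s \<le> h"
      thus "((\<lambda>s. f (P s h) - f (P s 0)) has_real_derivative
         dirder u f (P s h) - dirder u f (P s 0)) (at s)"
        unfolding P_def using h
        by (intro derivative_intros line_deriv_u) (auto intro!: d0[rule_format] inS inS1 inS2)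
    qed
    thus ?thesis using that by blast
  qed
  obtain \<eta> where \<eta>: "0 < \<eta>" "\<eta> < h"
    "dirder u f (P \<xi> h) - dirder u f (P \<xi> 0) = (h - 0) * ?A (P \<xi> \<eta>)"
  proof -
    have "\<exists>z. 0 < z \<and> z < h \<and> dirder u f (P \<xi> h) - dirder u f (P \<xi> 0) = (h - 0) * ?A (P \<xi> z)"
    proof (rule MVT2[of 0 h "\<lambda>t. dirder u f (P \<xi> t)"])
      show "0 < h" by fact
      fix t assume "0 \<le> t" "t \<le> h"
      thus "((\<lambda>t. dirder u f (P \<xi> t)) has_real_derivative ?A (P \<xi> t)) (at t)"
        unfolding P_def using h \<xi>
        by (intro line_deriv_v) (auto intro!: du[rule_format] inS)
    qed
    thus ?thesis using that by blast
  qed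
  have "\<Delta> = h * h * ?A (P \<xi> \<eta>)" using \<xi>(3) \<eta>(3) \<Delta>_def by (simp add: algebra_simps)
  moreover have "?A (P \<xi> \<eta>) > m" unfolding P_def using \<xi> \<eta> by (intro Agt) auto
  ultimately have D1: "\<Delta> > h * h * m" using h by simp
  obtain \<tau> where \<tau>: "0 < \<tau>" "\<tau> < h"
    "(f (P h h) - f (P 0 h)) - (f (P h 0) - f (P 0 0)) =
       (h - 0) * (dirder v f (P h \<tau>) - dirder v f (P 0 \<tau>))"
  proof -
    have "\<exists>z. 0 < z \<and> z < h \<and> (f (P h h) - f (P 0 h)) - (f (P h 0) - f (P 0 0)) =
       (h - 0) * (dirder v f (P h z) - dirder v f (P 0 z))"
    proof (rule MVT2[of 0 h "\<lambda>t. f (P h t) - f (P 0 t)"])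
      show "0 < h" by fact
      fix t assume "0 \<le> t" "t \<le> h"
      thus "((\<lambda>t. f (P h t) - f (P 0 t)) has_real_derivative
         dirder v f (P h t) - dirder v f (P 0 t)) (at t)"
        unfolding P_def using h
        by (intro derivative_intros line_deriv_v) (auto intro!: d0[rule_format] inS inS1 inS2)
    qed
    thus ?thesis using that by blast
  qed
  obtain \<sigma> where \<sigma>: "0 < \<sigma>" "\<sigma> < h"
    "dirder v f (P h \<tau>) - dirder v f (P 0 \<tau>) = (h - 0) * ?B (P \<sigma> \<tau>)"
  proof -
    have "\<exists>z. 0 < z \<and> z < h \<and> dirder v f (P h \<tau>) - dirder v f (P 0 \<tau>) = (h - 0) * ?B (P z \<tau>)"
    proof (rule MVT2[of 0 h "\<lambda>s. dirder v f (P s \<tau>)"])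
      show "0 < h" by fact
      fix s assume "0 \<le> s" "s \<le> h"
      thus "((\<lambda>s. dirder v f (P s \<tau>)) has_real_derivative ?B (P s \<tau>)) (at s)"
        unfolding P_def using h \<tau>
        by (intro line_deriv_u) (auto intro!: dv[rule_format] inS)
    qed
    thus ?thesis using that by blast
  qed
  have "\<Delta> = h * h * ?B (P \<sigma> \<tau>)" using \<tau>(3) \<sigma>(3) \<Delta>_def by (simp add: algebra_simps)
  moreover have "?B (P \<sigma> \<tau>) < m" unfolding P_def using \<sigma> \<tau> by (intro Blt) auto
  ultimately have "\<Delta> < h * h * m" using h by simp
  with D1 show False by simp
qed




lemma smooth_on_diffon: "smooth_on f S \<Longrightarrow> f differentiable_on S"
  unfolding smooth_on_def by (drule spec[of _ "[]"]) simp

lemma schwarz: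
  fixes f :: "'a::euclidean_space \<Rightarrow> real"
  assumes "smooth_on f S" "open S" "u \<in> Basis" "v \<in> Basis" "p \<in> S"
  shows "dirder v (dirder u f) p = dirder u (dirder v f) p"
proof -
  have d0: "\<forall>q\<in>S. f differentiable at q" using smooth_on_diff_at assms by blast
  have su: "smooth_on (dirder u f) S" and sv: "smooth_on (dirder v f) S"
    using smooth_on_dirder assms by blast+
  have du: "\<forall>q\<in>S. dirder u f differentiable at q" using smooth_on_diff_at su assms by blast
  have dv: "\<forall>q\<in>S. dirder v f differentiable at q" using smooth_on_diff_at sv assms by blast
  have cA: "continuous_on S (dirder v (dirder u f))"
  proof -
    have "smooth_on (dirder v (dirder u f)) S" using smooth_on_dirder su assms by blast
    hence "dirder v (dirder u f) differentiable_on S"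
      by (rule smooth_on_diffon)
    thus ?thesis by (rule differentiable_imp_continuous_on)
  qed
  have cB: "continuous_on S (dirder u (dirder v f))"
  proof -
    have "smooth_on (dirder u (dirder v f)) S" using smooth_on_dirder sv assms by blast
    hence "dirder u (dirder v f) differentiable_on S"
      by (rule smooth_on_diffon)
    thus ?thesis by (rule differentiable_imp_continuous_on)
  qed
  have "\<not> (dirder v (dirder u f) p > dirder u (dirder v f) p)"
    by (rule schwarz_half[OF assms(2,5) d0 du dv cA cB])
  moreover have "\<not> (dirder u (dirder v f) p > dirder v (dirder u f) p)"
    by (rule schwarz_half[OF assms(2,5) d0 dv du cB cA])
  ultimately show ?thesis by simp
qed

lemma axis_Basis: "(axis \<mu> (1::real)) \<in> (Basis :: (real^'n) set)"
  by (auto simp: Basis_vec_def)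

lemma ex_Basis: "((axis \<mu> 1, 0) :: (real^'n::finite) \<times> (real^'n)) \<in> Basis"
  by (auto simp: Basis_prod_def axis_Basis)

lemma ey_Basis: "((0, axis \<mu> 1) :: (real^'n::finite) \<times> (real^'n)) \<in> Basis"
  by (auto simp: Basis_prod_def axis_Basis)

lemma partials_full:
  fixes F :: "real^'n::finite \<Rightarrow> real^'n \<Rightarrow> real"
  assumes D: "(case_prod F has_derivative D) (at (x, y))"
  shows "dY \<mu> F x y = D (0, axis \<mu> 1)" "dX \<mu> F x y = D (axis \<mu> 1, 0)"
proof -
  have l1: "((\<lambda>y'. (x, y')) has_derivative (\<lambda>v. (0, v))) (at y)"
    by (auto intro!: derivative_eq_intros)
  have "((case_prod F \<circ> (\<lambda>y'. (x, y'))) has_derivative (D \<circ> (\<lambda>v. (0, v)))) (at y)"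
    by (rule diff_chain_at[OF l1]) (simp add: D)
  hence "((\<lambda>y'. F x y') has_derivative (\<lambda>v. D (0, v))) (at y)" by (simp add: o_def)
  hence "frechet_derivative (\<lambda>y'. F x y') (at y) = (\<lambda>v. D (0, v))" using frechet_derivative_at by metis
  thus "dY \<mu> F x y = D (0, axis \<mu> 1)" by (simp add: dY_def pd_def)
  have l2: "((\<lambda>x'. (x', y)) has_derivative (\<lambda>v. (v, 0))) (at x)"
    by (auto intro!: derivative_eq_intros)
  have "((case_prod F \<circ> (\<lambda>x'. (x', y))) has_derivative (D \<circ> (\<lambda>v. (v, 0)))) (at x)"
    by (rule diff_chain_at[OF l2]) (simp add: D)
  hence "((\<lambda>x'. F x' y) has_derivative (\<lambda>v. D (v, 0))) (at x)" by (simp add: o_def)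
  hence "frechet_derivative (\<lambda>x'. F x' y) (at x) = (\<lambda>v. D (v, 0))" using frechet_derivative_at by metis
  thus "dX \<mu> F x y = D (axis \<mu> 1, 0)" by (simp add: dX_def pd_def)
qed

lemma partials_dirder:
  fixes F :: "real^'n::finite \<Rightarrow> real^'n \<Rightarrow> real"
  assumes "case_prod F differentiable at (x, y)"
  shows "dY \<mu> F x y = dirder (0, axis \<mu> 1) (case_prod F) (x, y)"
        "dX \<mu> F x y = dirder (axis \<mu> 1, 0) (case_prod F) (x, y)"
  using partials_full[OF frechet_derivative_works[THEN iffD1, OF assms]] unfolding dirder_def by auto

lemma linear_expand:
  fixes g :: "real^'n::finite \<Rightarrow> real"
  assumes "linear g"
  shows "g w = (\<Sum>\<beta>\<in>UNIV. w $ \<beta> * g (axis \<beta> 1))"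
proof -
  have "g w = g (\<Sum>\<beta>\<in>UNIV. w $ \<beta> *\<^sub>R axis \<beta> 1)"
    using basis_expansion[of w] by (simp add: scalar_mult_eq_scaleR)
  also have "\<dots> = (\<Sum>\<beta>\<in>UNIV. w $ \<beta> * g (axis \<beta> 1))"
    using assms by (simp add: linear_sum linear.scaleR)
  finally show ?thesis .
qed

lemma chain_pd:
  fixes F :: "real^'n::finite \<Rightarrow> real^'n \<Rightarrow> real" and s :: "real^'n \<Rightarrow> real^'n"
  assumes F: "case_prod F differentiable at (x, s x)"
    and sd: "\<And>\<beta>. (\<lambda>x. s x $ \<beta>) differentiable at x"
  shows "pd \<alpha> (\<lambda>x'. F x' (s x')) x = dX \<alpha> F x (s x) + (\<Sum>\<beta>\<in>UNIV. dY \<beta> F x (s x) * pd \<alpha> (\<lambda>x'. s x' $ \<beta>) x)"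
proof -
  have "s differentiable at x"
    unfolding differentiable_componentwise_within[of s x UNIV, simplified]
  proof
    fix i :: "real^'n" assume "i \<in> Basis"
    then obtain \<beta> where i: "i = axis \<beta> 1" by (auto simp: Basis_vec_def)
    show "(\<lambda>x. s x \<bullet> i) differentiable at x" using sd[of \<beta>] by (simp add: i cart_eq_inner_axis[symmetric])
  qed
  then obtain s' where s': "(s has_derivative s') (at x)" unfolding differentiable_def by blast
  obtain D where D: "(case_prod F has_derivative D) (at (x, s x))" using F unfolding differentiable_def by blast
  have lD: "(D \<circ> (\<lambda>v. (v, s' v))) = (\<lambda>v. D (v, s' v))" by (simp add: o_def)
  have pr: "((\<lambda>x'. (x', s x')) has_derivative (\<lambda>v. (v, s' v))) (at x)"
    using s' by (auto intro!: derivative_eq_intros)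
  have "((case_prod F \<circ> (\<lambda>x'. (x', s x'))) has_derivative (D \<circ> (\<lambda>v. (v, s' v)))) (at x)"
    by (rule diff_chain_at[OF pr]) (simp add: D)
  hence "((\<lambda>x'. F x' (s x')) has_derivative (\<lambda>v. D (v, s' v))) (at x)" by (simp add: o_def)
  hence pdF: "pd \<alpha> (\<lambda>x'. F x' (s x')) x = D (axis \<alpha> 1, s' (axis \<alpha> 1))"
    unfolding pd_def using frechet_derivative_at by metis
  have sc: "((\<lambda>x'. s x' $ \<beta>) has_derivative (\<lambda>v. s' v $ \<beta>)) (at x)" for \<beta>
    using bounded_linear.has_derivative[OF bounded_linear_vec_nth s'] .
  have pds: "pd \<alpha> (\<lambda>x'. s x' $ \<beta>) x = s' (axis \<alpha> 1) $ \<beta>" for \<beta>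
    unfolding pd_def using frechet_derivative_at[OF sc] by metis
  have lin: "linear D" using has_derivative_linear[OF D] .
  have "D (axis \<alpha> 1, s' (axis \<alpha> 1)) = D (axis \<alpha> 1, 0) + D (0, s' (axis \<alpha> 1))"
    using linear_add[OF lin, of "(axis \<alpha> 1, 0)" "(0, s' (axis \<alpha> 1))"] by simp
  moreover have "linear (\<lambda>w. D (0, w))"
  proof (rule linearI)
    fix a b :: "real^'n" and c :: real
    have "D (0, a + b) = D ((0, a) + (0, b))" by simp
    also have "\<dots> = D (0, a) + D (0, b)" by (rule linear_add[OF lin])
    finally show "D (0, a + b) = D (0, a) + D (0, b)" .
    have "D (0, c *\<^sub>R a) = D (c *\<^sub>R (0, a))" by simp
    also have "\<dots> = c *\<^sub>R D (0, a)" by (rule linear_scale[OF lin])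
    finally show "D (0, c *\<^sub>R a) = c *\<^sub>R D (0, a)" .
  qed
  hence "D (0, s' (axis \<alpha> 1)) = (\<Sum>\<beta>\<in>UNIV. s' (axis \<alpha> 1) $ \<beta> * D (0, axis \<beta> 1))"
    by (rule linear_expand)
  ultimately show ?thesis
    using pdF pds partials_full[OF D] by (simp add: mult_ac)
qed




lemma alg:
  fixes gi :: "'n::finite \<Rightarrow> 'n \<Rightarrow> real" and dl P dg :: "'n \<Rightarrow> 'n \<Rightarrow> 'n \<Rightarrow> real"
    and Ds :: "'n \<Rightarrow> 'n \<Rightarrow> real"
  assumes gi_sym: "\<And>a b. gi a b = gi b a"
    and dl_sym: "\<And>a b c. dl a b c = dl a c b"
    and dg_sym: "\<And>b s a. dg b s a = dg a s b"
    and P_eq: "\<And>a b c. P a b c = dl a b c + (\<Sum>\<beta>\<in>UNIV. dg \<beta> b c * Ds a \<beta>)"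
  shows "(\<Sum>\<alpha>\<in>UNIV. (\<Sum>\<sigma>\<in>UNIV. gi \<alpha> \<sigma> * (P \<alpha> \<sigma> \<mu> + P \<mu> \<sigma> \<alpha> - P \<sigma> \<alpha> \<mu>)) / 2)
       = (\<Sum>\<alpha>\<in>UNIV. (\<Sum>\<sigma>\<in>UNIV. gi \<alpha> \<sigma> * (dl \<mu> \<sigma> \<alpha> + dl \<alpha> \<sigma> \<mu> - dl \<sigma> \<mu> \<alpha>)) / 2)
         + (\<Sum>\<beta>\<in>UNIV. (\<Sum>\<alpha>\<in>UNIV. \<Sum>\<sigma>\<in>UNIV. gi \<alpha> \<sigma> * (dg \<alpha> \<sigma> \<beta> / 2)) * Ds \<mu> \<beta>)"
proof -
  have T1: "(\<Sum>\<alpha>\<in>UNIV. \<Sum>\<sigma>\<in>UNIV. gi \<alpha> \<sigma> * P \<alpha> \<sigma> \<mu>) = (\<Sum>\<alpha>\<in>UNIV. \<Sum>\<sigma>\<in>UNIV. gi \<alpha> \<sigma> * P \<sigma> \<alpha> \<mu>)"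
    by (subst sum.swap) (simp add: gi_sym)
  have T2: "(\<Sum>\<alpha>\<in>UNIV. \<Sum>\<sigma>\<in>UNIV. gi \<alpha> \<sigma> * dl \<alpha> \<sigma> \<mu>) = (\<Sum>\<alpha>\<in>UNIV. \<Sum>\<sigma>\<in>UNIV. gi \<alpha> \<sigma> * dl \<sigma> \<mu> \<alpha>)"
    by (subst sum.swap) (simp add: gi_sym dl_sym)
  have L: "(\<Sum>\<alpha>\<in>UNIV. (\<Sum>\<sigma>\<in>UNIV. gi \<alpha> \<sigma> * (P \<alpha> \<sigma> \<mu> + P \<mu> \<sigma> \<alpha> - P \<sigma> \<alpha> \<mu>)) / 2)
     = (\<Sum>\<alpha>\<in>UNIV. \<Sum>\<sigma>\<in>UNIV. gi \<alpha> \<sigma> * P \<mu> \<sigma> \<alpha>) / 2"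
    using T1 by (simp add: algebra_simps sum.distrib sum_subtractf sum_divide_distrib[symmetric])
  have R1: "(\<Sum>\<alpha>\<in>UNIV. (\<Sum>\<sigma>\<in>UNIV. gi \<alpha> \<sigma> * (dl \<mu> \<sigma> \<alpha> + dl \<alpha> \<sigma> \<mu> - dl \<sigma> \<mu> \<alpha>)) / 2)
     = (\<Sum>\<alpha>\<in>UNIV. \<Sum>\<sigma>\<in>UNIV. gi \<alpha> \<sigma> * dl \<mu> \<sigma> \<alpha>) / 2"
    using T2 by (simp add: algebra_simps sum.distrib sum_subtractf sum_divide_distrib[symmetric])
  have R2: "(\<Sum>\<beta>\<in>UNIV. (\<Sum>\<alpha>\<in>UNIV. \<Sum>\<sigma>\<in>UNIV. gi \<alpha> \<sigma> * (dg \<alpha> \<sigma> \<beta> / 2)) * Ds \<mu> \<beta>)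
     = (\<Sum>\<alpha>\<in>UNIV. \<Sum>\<sigma>\<in>UNIV. gi \<alpha> \<sigma> * (\<Sum>\<beta>\<in>UNIV. dg \<beta> \<sigma> \<alpha> * Ds \<mu> \<beta>)) / 2"
  proof -
    have "(\<Sum>\<beta>\<in>UNIV. (\<Sum>\<alpha>\<in>UNIV. \<Sum>\<sigma>\<in>UNIV. gi \<alpha> \<sigma> * (dg \<alpha> \<sigma> \<beta> / 2)) * Ds \<mu> \<beta>)
       = (\<Sum>\<beta>\<in>UNIV. \<Sum>\<alpha>\<in>UNIV. \<Sum>\<sigma>\<in>UNIV. gi \<alpha> \<sigma> * dg \<beta> \<sigma> \<alpha> * Ds \<mu> \<beta> / 2)"
    proof -
      have e: "\<And>\<alpha> \<sigma> \<beta>. gi \<alpha> \<sigma> * (dg \<alpha> \<sigma> \<beta> / 2) * Ds \<mu> \<beta> = gi \<alpha> \<sigma> * dg \<beta> \<sigma> \<alpha> * Ds \<mu> \<beta> / 2"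
        using dg_sym by simp
      show ?thesis by (simp only: sum_distrib_right e)
    qed
    also have "\<dots> = (\<Sum>\<alpha>\<in>UNIV. \<Sum>\<sigma>\<in>UNIV. \<Sum>\<beta>\<in>UNIV. gi \<alpha> \<sigma> * dg \<beta> \<sigma> \<alpha> * Ds \<mu> \<beta> / 2)"
      by (subst sum.swap, rule sum.cong[OF refl], subst sum.swap, simp)
    also have "\<dots> = (\<Sum>\<alpha>\<in>UNIV. \<Sum>\<sigma>\<in>UNIV. gi \<alpha> \<sigma> * (\<Sum>\<beta>\<in>UNIV. dg \<beta> \<sigma> \<alpha> * Ds \<mu> \<beta>)) / 2"
      by (simp add: sum_distrib_left sum_divide_distrib[symmetric] mult.assoc)
    finally show ?thesis .
  qed
  have "(\<Sum>\<alpha>\<in>UNIV. \<Sum>\<sigma>\<in>UNIV. gi \<alpha> \<sigma> * P \<mu> \<sigma> \<alpha>) = 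
     (\<Sum>\<alpha>\<in>UNIV. \<Sum>\<sigma>\<in>UNIV. gi \<alpha> \<sigma> * dl \<mu> \<sigma> \<alpha>) +
     (\<Sum>\<alpha>\<in>UNIV. \<Sum>\<sigma>\<in>UNIV. gi \<alpha> \<sigma> * (\<Sum>\<beta>\<in>UNIV. dg \<beta> \<sigma> \<alpha> * Ds \<mu> \<beta>))"
    by (simp add: P_eq distrib_left sum.distrib)
  thus ?thesis unfolding L R1 R2 by (simp add: add_divide_distrib)
qed




definition SM :: "(real^'n::finite \<Rightarrow> real^'n \<Rightarrow> real) \<Rightarrow> (real^'n) set \<Rightarrow> bool" where
  "SM F U \<longleftrightarrow> smooth_on (case_prod F) (U \<times> (UNIV - {0}))"

lemma openS: "open U \<Longrightarrow> open (U \<times> (UNIV - {0::real^'n::finite}))"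
  by (intro open_Times open_Diff) auto

lemma SM_diff: "open U \<Longrightarrow> SM F U \<Longrightarrow> x \<in> U \<Longrightarrow> y \<noteq> 0 \<Longrightarrow> case_prod F differentiable at (x, y)"
  unfolding SM_def by (rule smooth_on_diff_at) (auto intro: openS)

lemma SM_dY: assumes "open U" "SM F U" shows "SM (dY \<mu> F) U"
proof -
  have "smooth_on (dirder (0, axis \<mu> 1) (case_prod F)) (U \<times> (UNIV - {0}))"
    using assms(2) unfolding SM_def by (rule smooth_on_dirder[OF _ ey_Basis])
  thus ?thesis unfolding SM_def
  proof (rule smooth_on_loc[OF openS[OF assms(1)], rotated])
    fix p assume "p \<in> U \<times> (UNIV - {0::real^'a})"
    then obtain x y where p: "p = (x, y)" "x \<in> U" "y \<noteq> 0" by auto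
    show "dirder (0, axis \<mu> 1) (case_prod F) p = case_prod (dY \<mu> F) p"
      using partials_dirder(1)[OF SM_diff[OF assms p(2,3)]] p(1) by simp
  qed
qed

lemma SM_dX: assumes "open U" "SM F U" shows "SM (dX \<mu> F) U"
proof -
  have "smooth_on (dirder (axis \<mu> 1, 0) (case_prod F)) (U \<times> (UNIV - {0}))"
    using assms(2) unfolding SM_def by (rule smooth_on_dirder[OF _ ex_Basis])
  thus ?thesis unfolding SM_def
  proof (rule smooth_on_loc[OF openS[OF assms(1)], rotated])
    fix p assume "p \<in> U \<times> (UNIV - {0::real^'a})"
    then obtain x y where p: "p = (x, y)" "x \<in> U" "y \<noteq> 0" by auto
    show "dirder (axis \<mu> 1, 0) (case_prod F) p = case_prod (dX \<mu> F) p"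
      using partials_dirder(2)[OF SM_diff[OF assms p(2,3)]] p(1) by simp
  qed
qed

lemma SM_cong:
  assumes U: "open U" and G1: "SM G1 U" and eq: "\<And>x y. x \<in> U \<Longrightarrow> y \<noteq> 0 \<Longrightarrow> G1 x y = G2 x y"
    and x: "x \<in> U" "y \<noteq> 0"
  shows "dY \<mu> G1 x y = dY \<mu> G2 x y" "dX \<mu> G1 x y = dX \<mu> G2 x y" "SM G2 U"
proof -
  have eq': "\<And>p. p \<in> U \<times> (UNIV - {0}) \<Longrightarrow> case_prod G1 p = case_prod G2 p" using eq by auto
  show G2: "SM G2 U" using G1 unfolding SM_def by (rule smooth_on_loc[OF openS[OF U] eq', rotated])
  have xy: "(x, y) \<in> U \<times> (UNIV - {0})" using x by auto
  show "dY \<mu> G1 x y = dY \<mu> G2 x y"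
    unfolding partials_dirder(1)[OF SM_diff[OF U G1 x]] partials_dirder(1)[OF SM_diff[OF U G2 x]]
    by (rule dirder_loc[OF openS[OF U] eq' xy])
  show "dX \<mu> G1 x y = dX \<mu> G2 x y"
    unfolding partials_dirder(2)[OF SM_diff[OF U G1 x]] partials_dirder(2)[OF SM_diff[OF U G2 x]]
    by (rule dirder_loc[OF openS[OF U] eq' xy])
qed

lemma dY_swap:
  assumes U: "open U" and F: "SM F U" and x: "x \<in> U" "y \<noteq> 0"
  shows "dY a (dY b F) x y = dY b (dY a F) x y"
proof -
  have xy: "(x, y) \<in> U \<times> (UNIV - {0})" using x by auto
  have e: "\<And>c. \<And>p. p \<in> U \<times> (UNIV - {0}) \<Longrightarrow> case_prod (dY c F) p = dirder (0, axis c 1) (case_prod F) p"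
    using partials_dirder(1)[OF SM_diff[OF U F]] by auto
  have "dY a (dY b F) x y = dirder (0, axis a 1) (dirder (0, axis b 1) (case_prod F)) (x, y)"
    unfolding partials_dirder(1)[OF SM_diff[OF U SM_dY[OF U F] x]]
    by (rule dirder_loc[OF openS[OF U] e xy])
  also have "\<dots> = dirder (0, axis b 1) (dirder (0, axis a 1) (case_prod F)) (x, y)"
    using F unfolding SM_def by (rule schwarz[OF _ openS[OF U] ey_Basis ey_Basis xy])
  also have "\<dots> = dY b (dY a F) x y"
    unfolding partials_dirder(1)[OF SM_diff[OF U SM_dY[OF U F] x]]
    by (rule dirder_loc[OF openS[OF U] e xy, symmetric])
  finally show ?thesis .
qed

lemma fg_sym:
  assumes U: "open U" and L: "SM L U" and x: "x \<in> U" "y \<noteq> 0"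
  shows "fg L a b x y = fg L b a x y"
  unfolding fg_def by (rule dY_swap[OF U L x])

lemma SM_fg: "open U \<Longrightarrow> SM L U \<Longrightarrow> SM (fg L a b) U"
  unfolding fg_def by (intro SM_dY)

lemma C_sym:
  assumes U: "open U" and L: "SM L U" and x: "x \<in> U" "y \<noteq> 0"
  shows "dY \<beta> (fg L \<sigma> \<alpha>) x y = dY \<alpha> (fg L \<sigma> \<beta>) x y"
proof -
  have "dY \<beta> (fg L \<sigma> \<alpha>) x y = dY \<beta> (dY \<alpha> (dY \<sigma> L)) x y"
    unfolding fg_def by (rule SM_cong(1)[OF U SM_dY[OF U SM_dY[OF U L]] _ x]) (rule dY_swap[OF U L])
  also have "\<dots> = dY \<alpha> (dY \<beta> (dY \<sigma> L)) x y" by (rule dY_swap[OF U SM_dY[OF U L] x])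
  also have "\<dots> = dY \<alpha> (fg L \<sigma> \<beta>) x y"
    unfolding fg_def by (rule SM_cong(1)[OF U SM_dY[OF U SM_dY[OF U L]] _ x]) (rule dY_swap[OF U L])
  finally show ?thesis .
qed

lemma deltaX_fg_sym:
  assumes U: "open U" and L: "SM L U" and x: "x \<in> U" "y \<noteq> 0"
  shows "deltaX L a (fg L b c) x y = deltaX L a (fg L c b) x y"
proof -
  have e: "\<And>x y. x \<in> U \<Longrightarrow> y \<noteq> 0 \<Longrightarrow> fg L b c x y = fg L c b x y" using fg_sym[OF U L] by blast
  show ?thesis unfolding deltaX_def
    using SM_cong(1,2)[OF U SM_fg[OF U L] e x] by simp
qed

lemma ginv_sym:
  assumes U: "open U" and L: "SM L U" and x: "x \<in> U" "y \<noteq> 0" and nd: "det (gmat L x y) \<noteq> 0"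
  shows "ginv L a b x y = ginv L b a x y"
proof -
  have "invertible (gmat L x y)" using nd invertible_det_nz by blast
  moreover have "transpose (gmat L x y) = gmat L x y"
    using fg_sym[OF U L x] by (simp add: transpose_def gmat_def vec_eq_iff)
  ultimately show ?thesis unfolding ginv_def by (rule matrix_inv_sym)
qed




lemma alg2:
  fixes pdZ dlZ I Zv :: "'n::finite \<Rightarrow> real" and dZ Ds cL cH :: "'n \<Rightarrow> 'n \<Rightarrow> real"
  assumes A: "\<And>\<alpha>. pdZ \<alpha> = dlZ \<alpha> + (\<Sum>\<beta>\<in>UNIV. dZ \<beta> \<alpha> * Ds \<alpha> \<beta>)"
    and B: "\<And>\<mu>. (\<Sum>\<alpha>\<in>UNIV. cL \<alpha> \<mu>) = (\<Sum>\<alpha>\<in>UNIV. cH \<alpha> \<mu>) + (\<Sum>\<beta>\<in>UNIV. I \<beta> * Ds \<mu> \<beta>)"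
  shows "(\<Sum>\<alpha>\<in>UNIV. pdZ \<alpha> + (\<Sum>\<mu>\<in>UNIV. cL \<alpha> \<mu> * Zv \<mu>))
       = (\<Sum>\<alpha>\<in>UNIV. dlZ \<alpha> + (\<Sum>\<mu>\<in>UNIV. cH \<alpha> \<mu> * Zv \<mu>))
         + (\<Sum>\<mu>\<in>UNIV. I \<mu> * (\<Sum>\<alpha>\<in>UNIV. Zv \<alpha> * Ds \<alpha> \<mu>))
         + (\<Sum>\<mu>\<in>UNIV. \<Sum>\<beta>\<in>UNIV. dZ \<beta> \<mu> * Ds \<mu> \<beta>)"
proof -
  have s1: "(\<Sum>\<alpha>\<in>UNIV. \<Sum>\<mu>\<in>UNIV. cL \<alpha> \<mu> * Zv \<mu>) = (\<Sum>\<mu>\<in>UNIV. Zv \<mu> * (\<Sum>\<alpha>\<in>UNIV. cL \<alpha> \<mu>))"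
    by (subst sum.swap) (simp add: sum_distrib_left mult.commute)
  have s2: "(\<Sum>\<alpha>\<in>UNIV. \<Sum>\<mu>\<in>UNIV. cH \<alpha> \<mu> * Zv \<mu>) = (\<Sum>\<mu>\<in>UNIV. Zv \<mu> * (\<Sum>\<alpha>\<in>UNIV. cH \<alpha> \<mu>))"
    by (subst sum.swap) (simp add: sum_distrib_left mult.commute)
  have s3: "(\<Sum>\<mu>\<in>UNIV. Zv \<mu> * (\<Sum>\<beta>\<in>UNIV. I \<beta> * Ds \<mu> \<beta>)) = (\<Sum>\<mu>\<in>UNIV. I \<mu> * (\<Sum>\<alpha>\<in>UNIV. Zv \<alpha> * Ds \<alpha> \<mu>))"
    unfolding sum_distrib_left by (subst sum.swap) (simp add: mult_ac)
  have "(\<Sum>\<alpha>\<in>UNIV. pdZ \<alpha> + (\<Sum>\<mu>\<in>UNIV. cL \<alpha> \<mu> * Zv \<mu>))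
      = (\<Sum>\<alpha>\<in>UNIV. dlZ \<alpha>) + (\<Sum>\<alpha>\<in>UNIV. \<Sum>\<beta>\<in>UNIV. dZ \<beta> \<alpha> * Ds \<alpha> \<beta>)
        + (\<Sum>\<mu>\<in>UNIV. Zv \<mu> * (\<Sum>\<alpha>\<in>UNIV. cH \<alpha> \<mu>)) + (\<Sum>\<mu>\<in>UNIV. Zv \<mu> * (\<Sum>\<beta>\<in>UNIV. I \<beta> * Ds \<mu> \<beta>))"
    by (simp add: sum.distrib A s1 B distrib_left)
  also have "\<dots> = (\<Sum>\<alpha>\<in>UNIV. dlZ \<alpha> + (\<Sum>\<mu>\<in>UNIV. cH \<alpha> \<mu> * Zv \<mu>))
         + (\<Sum>\<mu>\<in>UNIV. I \<mu> * (\<Sum>\<alpha>\<in>UNIV. Zv \<alpha> * Ds \<alpha> \<mu>))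
         + (\<Sum>\<mu>\<in>UNIV. \<Sum>\<beta>\<in>UNIV. dZ \<beta> \<mu> * Ds \<mu> \<beta>)"
    by (simp add: sum.distrib s2 s3)
  finally show ?thesis .
qed

theorem mainTheorem4:
  fixes L :: "real^'n::finite \<Rightarrow> real^'n \<Rightarrow> real"
    and Z :: "real^'n \<Rightarrow> real^'n \<Rightarrow> real^'n"
    and s :: "real^'n \<Rightarrow> real^'n"
    and U :: "(real^'n) set"
  assumes U_open: "open U"
    and L_smooth: "smooth_on (\<lambda>(x, y). L x y) (U \<times> (UNIV - {0}))"
    and L_hom: "\<And>x y t. x \<in> U \<Longrightarrow> y \<noteq> 0 \<Longrightarrow> t > 0 \<Longrightarrow> L x (t *\<^sub>R y) = t ^ 2 * L x y"
    and g_nondeg: "\<And>x y. x \<in> U \<Longrightarrow> y \<noteq> 0 \<Longrightarrow> det (gmat L x y) \<noteq> 0"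
    and Z_smooth: "\<And>\<mu>. smooth_on (\<lambda>(x, y). Z x y $ \<mu>) (U \<times> (UNIV - {0}))"
    and s_smooth: "\<And>\<mu>. smooth_on (\<lambda>x. s x $ \<mu>) U"
    and s_nonzero: "\<And>x. x \<in> U \<Longrightarrow> s x \<noteq> 0"
  shows "\<forall>x\<in>U.
     divLC (\<lambda>x. gmat L x (s x)) (\<lambda>x. Z x (s x)) x
       = divHC L Z x (s x)
         + (\<Sum>\<mu>\<in>UNIV. meanI L \<mu> x (s x) * (\<Sum>\<alpha>\<in>UNIV. Z x (s x) $ \<alpha> * Dsec L s \<alpha> \<mu> x))
         + (\<Sum>\<mu>\<in>UNIV. \<Sum>\<beta>\<in>UNIV. dY \<beta> (\<lambda>x y. Z x y $ \<mu>) x (s x) * Dsec L s \<mu> \<beta> x)"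
proof
  fix x assume xU: "x \<in> U"
  have y0: "s x \<noteq> 0" using s_nonzero xU by blast
  have xy: "x \<in> U" "s x \<noteq> 0" using xU y0 by auto
  have LSM: "SM L U" using L_smooth unfolding SM_def by simp
  have ZSM: "SM (\<lambda>x y. Z x y $ \<mu>) U" for \<mu> using Z_smooth[of \<mu>] unfolding SM_def by simp
  have sd: "(\<lambda>x. s x $ \<beta>) differentiable at x" for \<beta>
    using smooth_on_diffon[OF s_smooth[of \<beta>]] xU U_open by (simp add: differentiable_on_eq_differentiable_at)
  have nd: "det (gmat L x (s x)) \<noteq> 0" using g_nondeg xy by blast
  have A: "pd \<alpha> (\<lambda>x'. Z x' (s x') $ \<alpha>) x = deltaX L \<alpha> (\<lambda>x y. Z x y $ \<alpha>) x (s x)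
     + (\<Sum>\<beta>\<in>UNIV. dY \<beta> (\<lambda>x y. Z x y $ \<alpha>) x (s x) * Dsec L s \<alpha> \<beta> x)" for \<alpha>
  proof -
    have "pd \<alpha> (\<lambda>x'. Z x' (s x') $ \<alpha>) x = dX \<alpha> (\<lambda>x y. Z x y $ \<alpha>) x (s x)
       + (\<Sum>\<beta>\<in>UNIV. dY \<beta> (\<lambda>x y. Z x y $ \<alpha>) x (s x) * pd \<alpha> (\<lambda>x'. s x' $ \<beta>) x)"
      using chain_pd[OF SM_diff[OF U_open ZSM xy] sd] by simp
    thus ?thesis unfolding deltaX_def Dsec_def
      by (simp add: distrib_left sum.distrib algebra_simps)
  qed
  have B: "(\<Sum>\<alpha>\<in>UNIV. chrLC (\<lambda>x. gmat L x (s x)) \<alpha> \<alpha> \<mu> x)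
     = (\<Sum>\<alpha>\<in>UNIV. chrHC L \<alpha> \<mu> \<alpha> x (s x)) + (\<Sum>\<beta>\<in>UNIV. meanI L \<beta> x (s x) * Dsec L s \<mu> \<beta> x)" for \<mu>
  proof -
    have P_eq: "pd a (\<lambda>x'. gmat L x' (s x') $ b $ c) x = deltaX L a (fg L b c) x (s x)
       + (\<Sum>\<beta>\<in>UNIV. dY \<beta> (fg L b c) x (s x) * Dsec L s a \<beta> x)" for a b c
    proof -
      have "pd a (\<lambda>x'. gmat L x' (s x') $ b $ c) x = pd a (\<lambda>x'. fg L b c x' (s x')) x"
        by (simp add: gmat_def)
      also have "\<dots> = dX a (fg L b c) x (s x)
         + (\<Sum>\<beta>\<in>UNIV. dY \<beta> (fg L b c) x (s x) * pd a (\<lambda>x'. s x' $ \<beta>) x)"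
        by (rule chain_pd[OF SM_diff[OF U_open SM_fg[OF U_open LSM] xy] sd])
      finally show ?thesis unfolding deltaX_def Dsec_def
        by (simp add: distrib_left sum.distrib algebra_simps)
    qed
    have "(\<Sum>\<alpha>\<in>UNIV. (\<Sum>\<sigma>\<in>UNIV. ginv L \<alpha> \<sigma> x (s x) *
             (pd \<alpha> (\<lambda>x'. gmat L x' (s x') $ \<sigma> $ \<mu>) x + pd \<mu> (\<lambda>x'. gmat L x' (s x') $ \<sigma> $ \<alpha>) x
              - pd \<sigma> (\<lambda>x'. gmat L x' (s x') $ \<alpha> $ \<mu>) x)) / 2)
       = (\<Sum>\<alpha>\<in>UNIV. (\<Sum>\<sigma>\<in>UNIV. ginv L \<alpha> \<sigma> x (s x) *
             (deltaX L \<mu> (fg L \<sigma> \<alpha>) x (s x) + deltaX L \<alpha> (fg L \<sigma> \<mu>) x (s x)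
              - deltaX L \<sigma> (fg L \<mu> \<alpha>) x (s x))) / 2)
         + (\<Sum>\<beta>\<in>UNIV. (\<Sum>\<alpha>\<in>UNIV. \<Sum>\<sigma>\<in>UNIV. ginv L \<alpha> \<sigma> x (s x) * (dY \<alpha> (fg L \<sigma> \<beta>) x (s x) / 2))
              * Dsec L s \<mu> \<beta> x)"
    proof (rule alg)
      show "\<And>a b. ginv L a b x (s x) = ginv L b a x (s x)" by (rule ginv_sym[OF U_open LSM xy nd])
      show "\<And>a b c. deltaX L a (fg L b c) x (s x) = deltaX L a (fg L c b) x (s x)"
        by (rule deltaX_fg_sym[OF U_open LSM xy])
      show "\<And>b sa a. dY b (fg L sa a) x (s x) = dY a (fg L sa b) x (s x)"
        by (rule C_sym[OF U_open LSM xy])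
      show "\<And>a b c. pd a (\<lambda>x'. gmat L x' (s x') $ b $ c) x = deltaX L a (fg L b c) x (s x)
       + (\<Sum>\<beta>\<in>UNIV. dY \<beta> (fg L b c) x (s x) * Dsec L s a \<beta> x)" by (rule P_eq)
    qed
    thus ?thesis unfolding chrLC_def chrHC_def meanI_def cartan_def ginv_def by simp
  qed
  show "divLC (\<lambda>x. gmat L x (s x)) (\<lambda>x. Z x (s x)) x
       = divHC L Z x (s x)
         + (\<Sum>\<mu>\<in>UNIV. meanI L \<mu> x (s x) * (\<Sum>\<alpha>\<in>UNIV. Z x (s x) $ \<alpha> * Dsec L s \<alpha> \<mu> x))
         + (\<Sum>\<mu>\<in>UNIV. \<Sum>\<beta>\<in>UNIV. dY \<beta> (\<lambda>x y. Z x y $ \<mu>) x (s x) * Dsec L s \<mu> \<beta> x)"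
    unfolding divLC_def divHC_def
    using alg2[of "\<lambda>\<alpha>. pd \<alpha> (\<lambda>x'. Z x' (s x') $ \<alpha>) x" "\<lambda>\<alpha>. deltaX L \<alpha> (\<lambda>x y. Z x y $ \<alpha>) x (s x)"
        "\<lambda>\<beta> \<alpha>. dY \<beta> (\<lambda>x y. Z x y $ \<alpha>) x (s x)" "\<lambda>\<alpha> \<beta>. Dsec L s \<alpha> \<beta> x"
        "\<lambda>\<alpha> \<mu>. chrLC (\<lambda>x. gmat L x (s x)) \<alpha> \<alpha> \<mu> x" "\<lambda>\<alpha> \<mu>. chrHC L \<alpha> \<mu> \<alpha> x (s x)"
        "\<lambda>\<beta>. meanI L \<beta> x (s x)" "\<lambda>\<mu>. Z x (s x) $ \<mu>", OF A B] by simp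
qed


end
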